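(* There exist finitely presented amenable inverse monoids that are not sofic.
   Context: A monoid is a set with an associative binary operation admitting an identity element. A semigroup $S$ is an inverse semigroup if for every $s \in S$ there is a unique $x \in S$ with $s = sxs$ and $x = xsx$; an inverse monoid is an inverse semigroup that is a monoid. A monoid $M$ is amenable if there is a mean (a positive linear functional of norm one taking value $1$ on the constant function $1$) on $\ell^\infty(M)$ that is invariant under left and right translations by elements of $M$. For a non-empty finite set $X$, $\mathrm{Map}(X)$ denotes the monoid of all maps $X \to X$ under composition (identity $\mathrm{Id}_X$), with the Hamming metric $d_X(f,g) = |\{x \in X : f(x) \neq g(x)\}|/|X|$. For a monoid $M$, finite $K \subset M$ and $\varepsilon,\alpha>0$, a map $\varphi\colon M \to \mathrm{Map}(X)$ is a $(K,\varepsilon)$-morphism if $d_X(\varphi(k_1k_2),\varphi(k_1)\varphi(k_2)) \le \varepsilon$ for all $k_1,k_2 \in K$ and $d_X(\varphi(1_M),\mathrm{Id}_X) \le \varepsilon$; it is $(K,\alpha)$-injective if $d_X(\varphi(k_1),\varphi(k_2)) \ge \alpha$ for all distinct $k_1,k_2 \in K$. $M$ is sofic if for every finite $K \subset M$ and every $\varepsilon>0$ there exist a non-empty finite set $X$ and a $(K,1-\varepsilon)$-injective $(K,\varepsilon)$-morphism $\varphi\colon M \to \mathrm{Map}(X)$. *)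

theory Defs
  imports Complex_Main "HOL-Algebra.Group"
begin

definition inverse_monoid :: "('a, 'b) monoid_scheme \<Rightarrow> bool" where
  "inverse_monoid M \<longleftrightarrow> monoid M \<and>
     (\<forall>s \<in> carrier M. \<exists>!x. x \<in> carrier M \<and>
        s = s \<otimes>\<^bsub>M\<^esub> x \<otimes>\<^bsub>M\<^esub> s \<and> x = x \<otimes>\<^bsub>M\<^esub> s \<otimes>\<^bsub>M\<^esub> x)"

definition linf_bdd :: "('a, 'b) monoid_scheme \<Rightarrow> ('a \<Rightarrow> real) \<Rightarrow> bool" where
  "linf_bdd M f \<longleftrightarrow> (\<exists>C. \<forall>x \<in> carrier M. \<bar>f x\<bar> \<le> C)"

definition linf_norm :: "('a, 'b) monoid_scheme \<Rightarrow> ('a \<Rightarrow> real) \<Rightarrow> real" where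
  "linf_norm M f = (SUP x \<in> carrier M. \<bar>f x\<bar>)"

definition is_mean :: "('a, 'b) monoid_scheme \<Rightarrow> (('a \<Rightarrow> real) \<Rightarrow> real) \<Rightarrow> bool" where
  "is_mean M \<mu> \<longleftrightarrow>
     (\<forall>f g. linf_bdd M f \<longrightarrow> (\<forall>x \<in> carrier M. f x = g x) \<longrightarrow> \<mu> f = \<mu> g) \<and>
     (\<forall>f g. linf_bdd M f \<longrightarrow> linf_bdd M g \<longrightarrow> \<mu> (\<lambda>x. f x + g x) = \<mu> f + \<mu> g) \<and>
     (\<forall>c f. linf_bdd M f \<longrightarrow> \<mu> (\<lambda>x. c * f x) = c * \<mu> f) \<and>
     (\<forall>f. linf_bdd M f \<longrightarrow> (\<forall>x \<in> carrier M. 0 \<le> f x) \<longrightarrow> 0 \<le> \<mu> f) \<and>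
     (\<forall>f. linf_bdd M f \<longrightarrow> \<bar>\<mu> f\<bar> \<le> linf_norm M f) \<and>
     \<mu> (\<lambda>_. 1) = 1"

definition amenable_monoid :: "('a, 'b) monoid_scheme \<Rightarrow> bool" where
  "amenable_monoid M \<longleftrightarrow> (\<exists>\<mu>. is_mean M \<mu> \<and>
     (\<forall>a \<in> carrier M. \<forall>f. linf_bdd M f \<longrightarrow>
        \<mu> (\<lambda>x. f (a \<otimes>\<^bsub>M\<^esub> x)) = \<mu> f \<and> \<mu> (\<lambda>x. f (x \<otimes>\<^bsub>M\<^esub> a)) = \<mu> f))"

text \<open>Finite sets X are taken as finite sets of natural numbers (no loss of generality);
  Map(X) is represented by functions nat => nat mapping X into X, compared only on X.\<close>

definition hamming :: "nat set \<Rightarrow> (nat \<Rightarrow> nat) \<Rightarrow> (nat \<Rightarrow> nat) \<Rightarrow> real" where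
  "hamming X f g = real (card {x \<in> X. f x \<noteq> g x}) / real (card X)"

definition sofic_monoid :: "('a, 'b) monoid_scheme \<Rightarrow> bool" where
  "sofic_monoid M \<longleftrightarrow>
     (\<forall>K \<epsilon>. finite K \<longrightarrow> K \<subseteq> carrier M \<longrightarrow> 0 < \<epsilon> \<longrightarrow>
        (\<exists>(X :: nat set) (\<phi> :: 'a \<Rightarrow> nat \<Rightarrow> nat).
           finite X \<and> X \<noteq> {} \<and>
           (\<forall>m \<in> carrier M. \<phi> m ` X \<subseteq> X) \<and>
           (\<forall>k1 \<in> K. \<forall>k2 \<in> K.
              hamming X (\<phi> (k1 \<otimes>\<^bsub>M\<^esub> k2)) (\<phi> k1 \<circ> \<phi> k2) \<le> \<epsilon>) \<and>
           hamming X (\<phi> \<one>\<^bsub>M\<^esub>) id \<le> \<epsilon> \<and>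
           (\<forall>k1 \<in> K. \<forall>k2 \<in> K. k1 \<noteq> k2 \<longrightarrow> hamming X (\<phi> k1) (\<phi> k2) \<ge> 1 - \<epsilon>)))"

inductive pres_cong :: "(nat list \<times> nat list) set \<Rightarrow> nat list \<Rightarrow> nat list \<Rightarrow> bool"
  for R where
    pc_rel: "(u, v) \<in> R \<Longrightarrow> pres_cong R u v"
  | pc_refl: "pres_cong R u u"
  | pc_sym: "pres_cong R u v \<Longrightarrow> pres_cong R v u"
  | pc_trans: "pres_cong R u v \<Longrightarrow> pres_cong R v w \<Longrightarrow> pres_cong R u w"
  | pc_ctx: "pres_cong R u v \<Longrightarrow> pres_cong R (a @ u @ b) (a @ v @ b)"

definition pres_class :: "nat set \<Rightarrow> (nat list \<times> nat list) set \<Rightarrow> nat list \<Rightarrow> nat list set" where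
  "pres_class A R u = {v \<in> lists A. pres_cong R u v}"

definition presented_monoid :: "nat set \<Rightarrow> (nat list \<times> nat list) set \<Rightarrow> nat list set monoid" where
  "presented_monoid A R =
     \<lparr> carrier = pres_class A R ` lists A,
       mult = (\<lambda>P Q. pres_class A R ((SOME u. u \<in> P) @ (SOME v. v \<in> Q))),
       one = pres_class A R [] \<rparr>"

definition finite_presentation :: "nat set \<Rightarrow> (nat list \<times> nat list) set \<Rightarrow> bool" where
  "finite_presentation A R \<longleftrightarrow> finite A \<and> finite R \<and> R \<subseteq> lists A \<times> lists A"

end

theory Submission
  imports Defs
begin

fun bm :: "(nat \<times> nat) option \<Rightarrow> (nat \<times> nat) option \<Rightarrow> (nat \<times> nat) option" where
  "bm (Some (i,j)) (Some (k,l)) = Some (i + (k - j), l + (j - k))"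
| "bm _ _ = None"

lemma bm_None2[simp]: "bm m None = None"
  by (cases m) auto

lemma bm_assoc: "bm (bm x y) z = bm x (bm y z)"
  apply (cases x; cases y; cases z)
  apply (auto split: prod.splits)
  done

lemma bm_one_l[simp]: "bm (Some (0,0)) m = m"
  by (cases m) auto

lemma bm_one_r[simp]: "bm m (Some (0,0)) = m"
  by (cases m) auto

definition gl :: "nat \<Rightarrow> (nat \<times> nat) option" where
  "gl c = (if c = 0 then Some (0,1) else if c = 1 then Some (1,0) else None)"

definition nf :: "nat list \<Rightarrow> (nat \<times> nat) option" where
  "nf w = foldr (\<lambda>c acc. bm (gl c) acc) w (Some (0,0))"

lemma nf_Nil[simp]: "nf [] = Some (0,0)" by (simp add: nf_def)
lemma nf_Cons[simp]: "nf (c # w) = bm (gl c) (nf w)" by (simp add: nf_def)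

lemma nf_append: "nf (u @ v) = bm (nf u) (nf v)"
  by (induction u) (auto simp: bm_assoc)

definition A0 :: "nat set" where "A0 = {0,1,2}"
definition R0 :: "(nat list \<times> nat list) set" where
  "R0 = {([0,1],[]), ([2,0],[2]), ([0,2],[2]), ([2,1],[2]), ([1,2],[2]), ([2,2],[2])}"

lemma nf_sound: "pres_cong R0 u v \<Longrightarrow> nf u = nf v"
  by (induction rule: pres_cong.induct) (auto simp: R0_def gl_def nf_append)

definition canon :: "(nat \<times> nat) option \<Rightarrow> nat list" where
  "canon m = (case m of None \<Rightarrow> [2] | Some (i,j) \<Rightarrow> replicate i 1 @ replicate j 0)"

lemma nf_rep1[simp]: "nf (replicate i (Suc 0)) = Some (i,0)"
  by (induction i) (auto simp: gl_def)
lemma nf_rep0[simp]: "nf (replicate j 0) = Some (0,j)"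
  by (induction j) (auto simp: gl_def)

lemma nf_canon[simp]: "nf (canon m) = m"
  by (cases m) (auto simp: canon_def nf_append nf_rep1 nf_rep0 gl_def)

lemma canon_lists[simp]: "canon m \<in> lists A0"
  by (cases m) (auto simp: canon_def A0_def)

lemma pc_ctx': "pres_cong R u v \<Longrightarrow> pres_cong R (a @ u @ b) (a @ v @ b)"
  by (rule pc_ctx)

lemma pc_cons: "pres_cong R u v \<Longrightarrow> pres_cong R (c # u) (c # v)"
  using pc_ctx[of R u v "[c]" "[]"] by simp

lemma pc_head: "(x, y) \<in> R \<Longrightarrow> pres_cong R (x @ w) (y @ w)"
  using pc_ctx[OF pc_rel, of x y R "[]" w] by simp

lemma z_absorb: "x \<in> {0,1} \<Longrightarrow> pres_cong R0 (2 # x # w) (2 # w)"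
  using pc_head[of "[2,x]" "[2]" R0 w] by (auto simp: R0_def)

lemma z_rep1: "pres_cong R0 (2 # replicate i 1 @ w) (2 # w)"
proof (induction i)
  case 0 then show ?case by (simp add: pc_refl)
next
  case (Suc i)
  have "pres_cong R0 (2 # 1 # (replicate i 1 @ w)) (2 # (replicate i 1 @ w))" by (rule z_absorb) simp
  then show ?case using Suc by (auto intro: pc_trans)
qed
lemma z_rep0: "pres_cong R0 (2 # replicate i 0 @ w) (2 # w)"
proof (induction i)
  case 0 then show ?case by (simp add: pc_refl)
next
  case (Suc i)
  have "pres_cong R0 (2 # 0 # (replicate i 0 @ w)) (2 # (replicate i 0 @ w))" by (rule z_absorb) simp
  then show ?case using Suc by (auto intro: pc_trans)
qed

lemma step: "c \<in> A0 \<Longrightarrow> pres_cong R0 (c # canon m) (canon (bm (gl c) m))"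
proof -
  assume c: "c \<in> A0"
  show ?thesis
  proof (cases m)
    case None
    then show ?thesis using c pc_rel[of "[c,2]" "[2]" R0]
      by (auto simp: canon_def A0_def R0_def gl_def)
  next
    case (Some p)
    then obtain i j where m: "m = Some (i,j)" by (cases p) auto
    consider "c = 0" | "c = 1" | "c = 2" using c by (auto simp: A0_def)
    then show ?thesis
    proof cases
      case 1
      show ?thesis
      proof (cases i)
        case 0 then show ?thesis using 1 m
          by (auto simp: canon_def gl_def replicate_append_same[symmetric] intro: pc_refl)
      next
        case (Suc i')
        have "pres_cong R0 ([0,1] @ (replicate i' 1 @ replicate j 0)) ([] @ (replicate i' 1 @ replicate j 0))"
          by (rule pc_head) (simp add: R0_def)
        then show ?thesis using 1 m Suc by (simp add: canon_def gl_def)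
      qed
    next
      case 2 then show ?thesis using m by (simp add: canon_def gl_def pc_refl)
    next
      case 3
      have "pres_cong R0 (2 # replicate i 1 @ replicate j 0) (2 # replicate j 0)" by (rule z_rep1)
      moreover have "pres_cong R0 (2 # replicate j 0 @ []) (2 # [])" by (rule z_rep0)
      ultimately show ?thesis using 3 m by (auto simp: canon_def gl_def intro: pc_trans)
    qed
  qed
qed

lemma to_canon: "u \<in> lists A0 \<Longrightarrow> pres_cong R0 u (canon (nf u))"
proof (induction u)
  case Nil then show ?case by (simp add: canon_def pc_refl)
next
  case (Cons c w)
  then have "pres_cong R0 (c # w) (c # canon (nf w))" by (auto intro: pc_cons)
  then show ?case using step[of c "nf w"] Cons by (auto intro: pc_trans)
qed

lemma pc_iff: "u \<in> lists A0 \<Longrightarrow> v \<in> lists A0 \<Longrightarrow> pres_cong R0 u v \<longleftrightarrow> nf u = nf v"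
  using nf_sound to_canon pc_sym pc_trans by metis


abbreviation M0 where "M0 \<equiv> presented_monoid A0 R0"

definition cls :: "(nat \<times> nat) option \<Rightarrow> nat list set" where
  "cls m = pres_class A0 R0 (canon m)"

lemma cls_eq: "cls m = {v \<in> lists A0. nf v = m}"
proof -
  have "v \<in> lists A0 \<Longrightarrow> pres_cong R0 (canon m) v \<longleftrightarrow> nf v = m" for v
    using pc_iff[OF canon_lists, of v m] by auto
  then show ?thesis unfolding cls_def pres_class_def by blast
qed

lemma pclass: "u \<in> lists A0 \<Longrightarrow> pres_class A0 R0 u = cls (nf u)"
proof -
  assume u: "u \<in> lists A0"
  have "v \<in> lists A0 \<Longrightarrow> pres_cong R0 u v \<longleftrightarrow> nf v = nf u" for v
    using pc_iff[OF u, of v] by auto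
  then show ?thesis unfolding cls_eq pres_class_def by blast
qed

lemma carrier_M0: "carrier M0 = range cls"
proof -
  have "pres_class A0 R0 ` lists A0 = cls ` nf ` lists A0" by (auto simp: pclass image_image)
  moreover have "nf ` lists A0 = UNIV"
    using canon_lists nf_canon by (metis surj_def image_iff UNIV_eq_I)
  ultimately show ?thesis by (simp add: presented_monoid_def)
qed

lemma cls_inj[simp]: "cls m = cls n \<longleftrightarrow> m = n"
  by (metis (mono_tags, lifting) canon_lists cls_eq mem_Collect_eq nf_canon)

lemma some_cls: "(SOME u. u \<in> cls m) \<in> lists A0 \<and> nf (SOME u. u \<in> cls m) = m"
proof -
  have "canon m \<in> cls m" by (simp add: cls_eq)
  then have "(SOME u. u \<in> cls m) \<in> cls m" by (rule someI)
  then show ?thesis by (simp add: cls_eq)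
qed

lemma mult_cls[simp]: "cls m \<otimes>\<^bsub>M0\<^esub> cls n = cls (bm m n)"
  using some_cls[of m] some_cls[of n]
  by (simp add: presented_monoid_def pclass nf_append)

lemma one_M0[simp]: "\<one>\<^bsub>M0\<^esub> = cls (Some (0,0))"
  by (simp add: presented_monoid_def pclass[of "[]", simplified])

lemma monoid_M0: "monoid M0"
  by (rule monoidI) (auto simp: carrier_M0 bm_assoc)

definition binv :: "(nat \<times> nat) option \<Rightarrow> (nat \<times> nat) option" where
  "binv m = (case m of None \<Rightarrow> None | Some (i,j) \<Rightarrow> Some (j,i))"

lemma binv_ok: "bm (bm m (binv m)) m = m \<and> bm (bm (binv m) m) (binv m) = binv m"
  by (cases m) (auto simp: binv_def)

lemma binv_uniq: "bm (bm m n) m = m \<Longrightarrow> bm (bm n m) n = n \<Longrightarrow> n = binv m"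
  apply (cases m; cases n)
  apply (auto simp: binv_def split: prod.splits)
  done

lemma inverse_M0: "inverse_monoid M0"
  unfolding inverse_monoid_def
proof (intro conjI monoid_M0 ballI)
  fix s assume "s \<in> carrier M0"
  then obtain m where s: "s = cls m" by (auto simp: carrier_M0)
  show "\<exists>!x. x \<in> carrier M0 \<and> s = s \<otimes>\<^bsub>M0\<^esub> x \<otimes>\<^bsub>M0\<^esub> s \<and> x = x \<otimes>\<^bsub>M0\<^esub> s \<otimes>\<^bsub>M0\<^esub> x"
  proof (rule ex1I[of _ "cls (binv m)"])
    show "cls (binv m) \<in> carrier M0 \<and> s = s \<otimes>\<^bsub>M0\<^esub> cls (binv m) \<otimes>\<^bsub>M0\<^esub> s \<and>
      cls (binv m) = cls (binv m) \<otimes>\<^bsub>M0\<^esub> s \<otimes>\<^bsub>M0\<^esub> cls (binv m)"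
      using binv_ok[of m] by (simp add: s carrier_M0)
  next
    fix x assume x: "x \<in> carrier M0 \<and> s = s \<otimes>\<^bsub>M0\<^esub> x \<otimes>\<^bsub>M0\<^esub> s \<and> x = x \<otimes>\<^bsub>M0\<^esub> s \<otimes>\<^bsub>M0\<^esub> x"
    then obtain n where n: "x = cls n" by (auto simp: carrier_M0)
    from x have "bm (bm m n) m = m" "bm (bm n m) n = n" by (simp_all add: s n)
    then show "x = cls (binv m)" using binv_uniq n by simp
  qed
qed

lemma amenable_M0: "amenable_monoid M0"
  unfolding amenable_monoid_def
proof (intro exI[of _ "\<lambda>f. f (cls None)"] conjI ballI allI impI)
  show "is_mean M0 (\<lambda>f. f (cls None))"
    unfolding is_mean_def
  proof (intro conjI allI impI)
    fix f :: "nat list set \<Rightarrow> real" assume b: "linf_bdd M0 f"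
    then obtain C where C: "\<forall>x\<in>carrier M0. \<bar>f x\<bar> \<le> C" by (auto simp: linf_bdd_def)
    have "bdd_above ((\<lambda>x. \<bar>f x\<bar>) ` carrier M0)" using C by (auto intro: bdd_aboveI2)
    moreover have "cls None \<in> carrier M0" by (simp add: carrier_M0)
    ultimately show "\<bar>f (cls None)\<bar> \<le> linf_norm M0 f"
      unfolding linf_norm_def by (rule cSUP_upper2) simp
  qed (auto simp: carrier_M0)
qed (auto simp: carrier_M0)


lemma hamming_le: "finite X \<Longrightarrow> X \<noteq> {} \<Longrightarrow>
   hamming X f g \<le> e \<longleftrightarrow> real (card {x\<in>X. f x \<noteq> g x}) \<le> e * real (card X)"
  unfolding hamming_def by (simp add: pos_divide_le_eq card_gt_0_iff)

lemma card_union_le3: "finite B \<Longrightarrow> finite C \<Longrightarrow> S \<subseteq> B \<union> C \<Longrightarrow> real (card S) \<le> real (card B) + real (card C)"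
  by (metis card_Un_le card_mono finite_UnI of_nat_add of_nat_le_iff order_trans)

lemma counting:
  fixes X :: "nat set" and pa pb p1 pba :: "nat \<Rightarrow> nat"
  assumes fin: "finite X" and ne: "X \<noteq> {}" and pbX: "pb ` X \<subseteq> X"
    and h1: "hamming X p1 (pa \<circ> pb) \<le> e" and h2: "hamming X p1 id \<le> e"
    and h3: "hamming X pba (pb \<circ> pa) \<le> e"
  shows "hamming X pba p1 \<le> 4 * e"
proof -
  define n where "n = real (card X)"
  define D where "D f g = {x\<in>X. f x \<noteq> (g x::nat)}" for f g :: "nat \<Rightarrow> nat"
  have finD: "finite (D f g)" for f g using fin by (simp add: D_def)
  have c1: "real (card (D p1 (pa \<circ> pb))) \<le> e * n" using h1 hamming_le[OF fin ne] by (simp add: D_def n_def)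
  have c2: "real (card (D p1 id)) \<le> e * n" using h2 hamming_le[OF fin ne] by (simp add: D_def n_def)
  have c3: "real (card (D pba (pb \<circ> pa))) \<le> e * n" using h3 hamming_le[OF fin ne] by (simp add: D_def n_def)
  define Y where "Y = X - D (pa \<circ> pb) id"
  have sub1: "D (pa \<circ> pb) id \<subseteq> D p1 (pa \<circ> pb) \<union> D p1 id" by (auto simp: D_def)
  have cD: "real (card (D (pa \<circ> pb) id)) \<le> 2 * e * n"
    using card_union_le3[OF finD finD sub1] c1 c2 by simp
  have injY: "inj_on pb Y" unfolding inj_on_def Y_def D_def by (metis (mono_tags, lifting) DiffD1 DiffD2 comp_apply id_apply mem_Collect_eq)
  have YX: "Y \<subseteq> X" by (auto simp: Y_def)
  have finY: "finite Y" using YX fin finite_subset by blast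
  have cardY: "card Y = card X - card (D (pa \<circ> pb) id)"
    unfolding Y_def by (rule card_Diff_subset) (auto simp: fin D_def)
  have pbY: "pb ` Y \<subseteq> X" using YX pbX by auto
  have sub2: "D (pb \<circ> pa) id \<subseteq> X - pb ` Y"
  proof
    fix x assume x: "x \<in> D (pb \<circ> pa) id"
    show "x \<in> X - pb ` Y"
    proof (rule ccontr)
      assume "x \<notin> X - pb ` Y"
      then obtain y where "y \<in> Y" "x = pb y" using x by (auto simp: D_def)
      then have "pa x = y" by (auto simp: Y_def D_def)
      then show False using x \<open>x = pb y\<close> by (auto simp: D_def)
    qed
  qed
  have "card (X - pb ` Y) = card X - card (pb ` Y)" by (rule card_Diff_subset[OF finite_imageI[OF finY] pbY])
  also have "card (pb ` Y) = card Y" by (rule card_image[OF injY])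
  finally have "card (X - pb ` Y) = card (D (pa \<circ> pb) id)"
    using cardY card_mono[OF fin, of "D (pa \<circ> pb) id"] by (auto simp: D_def)
  then have cD2: "real (card (D (pb \<circ> pa) id)) \<le> 2 * e * n"
    using card_mono[OF _ sub2] fin cD by (metis finite_Diff of_nat_le_iff order_trans)
  have sub3: "D pba p1 \<subseteq> (D pba (pb \<circ> pa) \<union> D (pb \<circ> pa) id) \<union> D p1 id" by (auto simp: D_def)
  have "real (card (D pba p1)) \<le> real (card (D pba (pb \<circ> pa) \<union> D (pb \<circ> pa) id)) + real (card (D p1 id))"
    by (rule card_union_le3[OF _ finD sub3]) (simp add: finD)
  also have "real (card (D pba (pb \<circ> pa) \<union> D (pb \<circ> pa) id)) \<le> real (card (D pba (pb \<circ> pa))) + real (card (D (pb \<circ> pa) id))"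
    by (rule card_union_le3[OF finD finD]) simp
  finally have "real (card (D pba p1)) \<le> 4 * e * n" using c2 c3 cD2 by linarith
  then show ?thesis using hamming_le[OF fin ne] by (simp add: D_def n_def)
qed

lemma not_sofic_M0: "\<not> sofic_monoid M0"
proof
  assume "sofic_monoid M0"
  define a where "a = cls (Some (0,1))"
  define b where "b = cls (Some (1,0))"
  define e where "e = cls (Some (0,0))"
  define ba where "ba = cls (Some (1,1))"
  define K where "K = {a, b, e, ba}"
  have KC: "K \<subseteq> carrier M0" by (auto simp: K_def a_def b_def e_def ba_def carrier_M0)
  obtain X and \<phi> :: "nat list set \<Rightarrow> nat \<Rightarrow> nat" where
    fin: "finite X" and ne: "X \<noteq> {}" and maps: "\<forall>m \<in> carrier M0. \<phi> m ` X \<subseteq> X"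
    and mor: "\<forall>k1 \<in> K. \<forall>k2 \<in> K. hamming X (\<phi> (k1 \<otimes>\<^bsub>M0\<^esub> k2)) (\<phi> k1 \<circ> \<phi> k2) \<le> 1/10"
    and one: "hamming X (\<phi> \<one>\<^bsub>M0\<^esub>) id \<le> 1/10"
    and inj: "\<forall>k1 \<in> K. \<forall>k2 \<in> K. k1 \<noteq> k2 \<longrightarrow> hamming X (\<phi> k1) (\<phi> k2) \<ge> 1 - 1/10"
    using \<open>sofic_monoid M0\<close> KC unfolding sofic_monoid_def
    by (metis (no_types, lifting) K_def finite.emptyI finite.insertI zero_less_divide_1_iff zero_less_numeral)
  have ab: "a \<otimes>\<^bsub>M0\<^esub> b = e" by (simp add: a_def b_def e_def)
  have ba': "b \<otimes>\<^bsub>M0\<^esub> a = ba" by (simp add: a_def b_def ba_def)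
  have h1: "hamming X (\<phi> e) (\<phi> a \<circ> \<phi> b) \<le> 1/10" using mor ab by (auto simp: K_def)
  have h2: "hamming X (\<phi> e) id \<le> 1/10" using one by (simp add: e_def)
  have h3: "hamming X (\<phi> ba) (\<phi> b \<circ> \<phi> a) \<le> 1/10" using mor ba' by (auto simp: K_def)
  have pbX: "\<phi> b ` X \<subseteq> X" using maps by (auto simp: b_def carrier_M0)
  have "hamming X (\<phi> ba) (\<phi> e) \<le> 4 * (1/10)" by (rule counting[OF fin ne pbX h1 h2 h3])
  moreover have "hamming X (\<phi> ba) (\<phi> e) \<ge> 1 - 1/10" using inj by (auto simp: K_def ba_def e_def)
  ultimately show False by simp
qed

theorem corollary5p5:
  shows "\<exists>A R. finite_presentation A R \<and>
           inverse_monoid (presented_monoid A R) \<and>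
           amenable_monoid (presented_monoid A R) \<and>
           \<not> sofic_monoid (presented_monoid A R)"
proof (intro exI conjI)
  show "finite_presentation A0 R0" by (auto simp: finite_presentation_def A0_def R0_def)
qed (rule inverse_M0 amenable_M0 not_sofic_M0)+

end
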